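(* For every $n \in \mathbb{N}$ there are MILP instances $I_1$ and $I_2$ with $n \times n$ constraint matrices $A_1$ and $A_2$ respectively, such that $A_1$ has primal, dual and incidence treewidth bounded by an absolute constant and $\|A_1\|_\infty = 2$, $A_2$ is a 4-block $n$-fold matrix all of whose blocks are the $1\times 1$ matrix $(1)$, and the fractionality of $I_1$ is $2^{\Omega(n)}$ while the fractionality of $I_2$ is $\Omega(n)$.
   Context: An MILP instance is $\min\{\mathbf{c}\mathbf{x} \mid A\mathbf{x}=\mathbf{b},\ \mathbf{l}\le\mathbf{x}\le\mathbf{u},\ \mathbf{x}\in\mathbb{Z}^z\times\mathbb{Q}^q\}$ with integral data. The fractionality of an instance is the minimum, over all optimal solutions $\mathbf{x}$, of the largest denominator among the entries of $\mathbf{x}$ written in lowest terms. The primal graph of $A$ has the columns as vertices, adjacent if some row is non-zero in both; the dual graph is the primal graph of $A^{\intercal}$; the incidence graph is the bipartite graph on rows and columns with a row adjacent to a column if the corresponding entry is non-zero; primal/dual/incidence treewidth is the treewidth of these graphs. A 4-block $n$-fold matrix has the block form $\begin{pmatrix} C & D & D & \cdots & D \\ B & A & & & \\ B & & A & & \\ \vdots & & & \ddots & \\ B & & & & A\end{pmatrix}$ (other blocks zero) for blocks $A,B,C,D$. *)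

theory Defs
  imports Complex_Main
begin

text \<open>Columns (variables) are indexed 0..<ncols, rows 0..<nrows; the first nint variables
  are the integer ones (z = nint, q = ncols - nint).\<close>

record milp =
  mat  :: "nat \<Rightarrow> nat \<Rightarrow> int"
  nrows :: nat
  ncols :: nat
  rhs  :: "nat \<Rightarrow> int"
  obj  :: "nat \<Rightarrow> int"
  lb   :: "nat \<Rightarrow> int"
  ub   :: "nat \<Rightarrow> int"
  nint :: nat

definition milp_wf :: "milp \<Rightarrow> bool" where
  "milp_wf I \<longleftrightarrow> nint I \<le> ncols I"

definition feasible :: "milp \<Rightarrow> (nat \<Rightarrow> rat) \<Rightarrow> bool" where
  "feasible I x \<longleftrightarrow>
     (\<forall>i<nrows I. (\<Sum>j<ncols I. of_int (mat I i j) * x j) = of_int (rhs I i)) \<and>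
     (\<forall>j<ncols I. of_int (lb I j) \<le> x j \<and> x j \<le> of_int (ub I j)) \<and>
     (\<forall>j<nint I. x j \<in> \<int>) \<and>
     (\<forall>j\<ge>ncols I. x j = 0)"

definition objval :: "milp \<Rightarrow> (nat \<Rightarrow> rat) \<Rightarrow> rat" where
  "objval I x = (\<Sum>j<ncols I. of_int (obj I j) * x j)"

definition optimal :: "milp \<Rightarrow> (nat \<Rightarrow> rat) \<Rightarrow> bool" where
  "optimal I x \<longleftrightarrow> feasible I x \<and> (\<forall>y. feasible I y \<longrightarrow> objval I x \<le> objval I y)"

definition has_optimum :: "milp \<Rightarrow> bool" where
  "has_optimum I \<longleftrightarrow> (\<exists>x. optimal I x)"

definition denom :: "rat \<Rightarrow> nat" where
  "denom q = nat (snd (quotient_of q))"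

definition max_denom :: "milp \<Rightarrow> (nat \<Rightarrow> rat) \<Rightarrow> nat" where
  "max_denom I x = Max (insert 1 ((\<lambda>j. denom (x j)) ` {..<ncols I}))"

text \<open>Fractionality: minimum over optimal solutions of the largest denominator
  (meaningful when the instance has an optimal solution).\<close>
definition fractionality :: "milp \<Rightarrow> nat" where
  "fractionality I = (LEAST d. \<exists>x. optimal I x \<and> max_denom I x = d)"

text \<open>A tree on a finite nonempty node set N with symmetric irreflexive edge relation F:
  connected with exactly card N - 1 (undirected) edges.\<close>
definition is_tree :: "nat set \<Rightarrow> (nat \<times> nat) set \<Rightarrow> bool" where
  "is_tree N F \<longleftrightarrow> finite N \<and> N \<noteq> {} \<and> F \<subseteq> N \<times> N \<and> sym F \<and> irrefl F \<and>
     (\<forall>s\<in>N. \<forall>t\<in>N. (s, t) \<in> F\<^sup>*) \<and> card F = 2 * (card N - 1)"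

definition tree_decomposition ::
  "'v set \<Rightarrow> ('v \<times> 'v) set \<Rightarrow> nat set \<Rightarrow> (nat \<times> nat) set \<Rightarrow> (nat \<Rightarrow> 'v set) \<Rightarrow> bool" where
  "tree_decomposition V E N F bag \<longleftrightarrow>
     is_tree N F \<and>
     (\<forall>t\<in>N. bag t \<subseteq> V) \<and>
     (\<forall>v\<in>V. \<exists>t\<in>N. v \<in> bag t) \<and>
     (\<forall>(u, v)\<in>E. \<exists>t\<in>N. u \<in> bag t \<and> v \<in> bag t) \<and>
     (\<forall>v\<in>V. \<forall>s\<in>N. \<forall>t\<in>N. v \<in> bag s \<longrightarrow> v \<in> bag t \<longrightarrow>
        (s, t) \<in> (F \<inter> {(a, b). v \<in> bag a \<and> v \<in> bag b})\<^sup>*)"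

definition decomp_width :: "nat set \<Rightarrow> (nat \<Rightarrow> 'v set) \<Rightarrow> nat" where
  "decomp_width N bag = Max ((\<lambda>t. card (bag t)) ` N) - 1"

definition treewidth :: "'v set \<Rightarrow> ('v \<times> 'v) set \<Rightarrow> nat" where
  "treewidth V E = (LEAST k. \<exists>N F bag. tree_decomposition V E N F bag \<and> decomp_width N bag = k)"

definition primal_graph :: "(nat \<Rightarrow> nat \<Rightarrow> int) \<Rightarrow> nat \<Rightarrow> nat \<Rightarrow> (nat \<times> nat) set" where
  "primal_graph A m d = {(j, j'). j < d \<and> j' < d \<and> j \<noteq> j' \<and> (\<exists>i<m. A i j \<noteq> 0 \<and> A i j' \<noteq> 0)}"

definition dual_graph :: "(nat \<Rightarrow> nat \<Rightarrow> int) \<Rightarrow> nat \<Rightarrow> nat \<Rightarrow> (nat \<times> nat) set" where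
  "dual_graph A m d = {(i, i'). i < m \<and> i' < m \<and> i \<noteq> i' \<and> (\<exists>j<d. A i j \<noteq> 0 \<and> A i' j \<noteq> 0)}"

definition incidence_graph :: "(nat \<Rightarrow> nat \<Rightarrow> int) \<Rightarrow> nat \<Rightarrow> nat \<Rightarrow> ((nat + nat) \<times> (nat + nat)) set" where
  "incidence_graph A m d =
     {(Inl i, Inr j) | i j. i < m \<and> j < d \<and> A i j \<noteq> 0} \<union>
     {(Inr j, Inl i) | i j. i < m \<and> j < d \<and> A i j \<noteq> 0}"

definition primal_tw :: "(nat \<Rightarrow> nat \<Rightarrow> int) \<Rightarrow> nat \<Rightarrow> nat \<Rightarrow> nat" where
  "primal_tw A m d = treewidth {..<d} (primal_graph A m d)"

definition dual_tw :: "(nat \<Rightarrow> nat \<Rightarrow> int) \<Rightarrow> nat \<Rightarrow> nat \<Rightarrow> nat" where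
  "dual_tw A m d = treewidth {..<m} (dual_graph A m d)"

definition incidence_tw :: "(nat \<Rightarrow> nat \<Rightarrow> int) \<Rightarrow> nat \<Rightarrow> nat \<Rightarrow> nat" where
  "incidence_tw A m d = treewidth (Inl ` {..<m} \<union> Inr ` {..<d}) (incidence_graph A m d)"

definition max_norm :: "(nat \<Rightarrow> nat \<Rightarrow> int) \<Rightarrow> nat \<Rightarrow> nat \<Rightarrow> int" where
  "max_norm A m d = Max ({0} \<union> {\<bar>A i j\<bar> | i j. i < m \<and> j < d})"

text \<open>Blocks: C is r\<times>s, D is r\<times>t, B is p\<times>s, A is p\<times>t; k copies.
  The result has r + k*p rows and s + k*t columns; entries outside are 0.\<close>
definition four_block_nfold ::
  "nat \<Rightarrow> nat \<Rightarrow> nat \<Rightarrow> nat \<Rightarrow> nat \<Rightarrow>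
   (nat \<Rightarrow> nat \<Rightarrow> int) \<Rightarrow> (nat \<Rightarrow> nat \<Rightarrow> int) \<Rightarrow> (nat \<Rightarrow> nat \<Rightarrow> int) \<Rightarrow> (nat \<Rightarrow> nat \<Rightarrow> int) \<Rightarrow>
   nat \<Rightarrow> nat \<Rightarrow> int" where
  "four_block_nfold k r s p t Am Bm Cm Dm i j =
     (if i < r + k * p \<and> j < s + k * t then
        (if i < r then
           (if j < s then Cm i j else Dm i ((j - s) mod t))
         else
           (if j < s then Bm ((i - r) mod p) j
            else if (j - s) div t = (i - r) div p then Am ((i - r) mod p) ((j - s) mod t)
            else 0))
      else 0)"

end

theory Submission
  imports Defs
begin


lemma denom_inv_nat: "k > 0 \<Longrightarrow> denom (1 / of_nat k) = k"
proof -
  assume k: "k > 0"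
  have "(1::rat) / of_nat k = Fract 1 (int k)" by (simp add: Fract_of_int_quotient)
  then show ?thesis using k by (simp add: denom_def quotient_of_Fract)
qed

lemma max_denom_ge: "j < ncols I \<Longrightarrow> denom (x j) \<le> max_denom I x"
  unfolding max_denom_def by (rule Max_ge) auto

lemma fract_ge:
  assumes "has_optimum I" "\<And>x. optimal I x \<Longrightarrow> d \<le> max_denom I x"
  shows "d \<le> fractionality I"
proof -
  obtain x where "optimal I x" using assms(1) has_optimum_def by blast
  then have "\<exists>d x. optimal I x \<and> max_denom I x = d" by blast
  then have "\<exists>x. optimal I x \<and> max_denom I x = fractionality I"
    unfolding fractionality_def by (rule LeastI_ex)
  then show ?thesis using assms(2) by metis
qed

lemma opt_zero: "obj I = (\<lambda>_. 0) \<Longrightarrow> optimal I x \<longleftrightarrow> feasible I x"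
  by (simp add: optimal_def objval_def)

lemma tw_path:
  fixes f :: "'v \<Rightarrow> nat" and m :: nat
  assumes inj: "inj_on f V" and rng: "\<forall>v\<in>V. f v < m" and m: "m \<ge> 1"
    and EV: "E \<subseteq> V \<times> V" and E: "\<forall>(u,v)\<in>E. f u \<le> f v + 1 \<and> f v \<le> f u + 1"
  shows "treewidth V E \<le> 1"
proof -
  define N where "N = {..<m}"
  define F where "F = {(a,b). a<m \<and> b<m \<and> (a = b+1 \<or> b = a+1)}"
  define bag where "bag t = {v\<in>V. f v = t \<or> f v = t+1}" for t
  have symF: "sym F" unfolding F_def sym_def by auto
  have c0: "(0,t) \<in> F\<^sup>*" if "t < m" for t
    using that
  proof (induction t)
    case 0 then show ?case by simp
  next
    case (Suc t)
    then have "(t, Suc t) \<in> F" unfolding F_def by auto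
    with Suc show ?case by (meson Suc_lessD rtrancl.rtrancl_into_rtrancl)
  qed
  have conn: "\<forall>s\<in>N. \<forall>t\<in>N. (s, t) \<in> F\<^sup>*"
  proof (intro ballI)
    fix s t assume "s \<in> N" "t \<in> N"
    then have "(0,s) \<in> F\<^sup>*" "(0,t) \<in> F\<^sup>*" using c0 N_def by auto
    then have "(s,0) \<in> F\<^sup>*" using symF by (meson sym_conv_converse_eq rtrancl_converseI sym_rtrancl symD)
    then show "(s,t) \<in> F\<^sup>*" using \<open>(0,t) \<in> F\<^sup>*\<close> by simp
  qed
  have Feq: "F = (\<lambda>a. (a, a+1)) ` {..<m-1} \<union> (\<lambda>a. (a+1, a)) ` {..<m-1}"
    unfolding F_def by (auto simp: image_def) 
  have cardF: "card F = 2 * (m - 1)"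
  proof -
    have d: "(\<lambda>a. (a, a+1)) ` {..<m-1} \<inter> (\<lambda>a. (a+1, a)) ` {..<m-1} = {}" by auto
    have "card F = card ((\<lambda>a. (a, a+1)) ` {..<m-1}) + card ((\<lambda>a. (a+1, a)) ` {..<m-1})"
      unfolding Feq by (rule card_Un_disjoint) (use d in auto)
    also have "\<dots> = 2 * (m - 1)" by (simp add: card_image inj_on_def)
    finally show ?thesis .
  qed
  have tree: "is_tree N F" unfolding is_tree_def
    using conn cardF symF m by (auto simp: N_def F_def irrefl_def lessThan_empty_iff)
  have td: "tree_decomposition V E N F bag" unfolding tree_decomposition_def
  proof (intro conjI)
    show "is_tree N F" by (rule tree)
    show "\<forall>t\<in>N. bag t \<subseteq> V" unfolding bag_def by auto
    show "\<forall>v\<in>V. \<exists>t\<in>N. v \<in> bag t" using rng unfolding bag_def N_def by auto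
    show "\<forall>(u, v)\<in>E. \<exists>t\<in>N. u \<in> bag t \<and> v \<in> bag t"
    proof (clarify)
      fix u v assume uv: "(u,v) \<in> E"
      then have "u \<in> V" "v \<in> V" using EV by auto
      moreover have "f u \<le> f v + 1 \<and> f v \<le> f u + 1" using E uv by auto
      moreover have "f u < m" "f v < m" using rng \<open>u \<in> V\<close> \<open>v \<in> V\<close> by auto
      ultimately show "\<exists>t\<in>N. u \<in> bag t \<and> v \<in> bag t"
        unfolding bag_def N_def by (intro bexI[of _ "min (f u) (f v)"]) auto
    qed
    show "\<forall>v\<in>V. \<forall>s\<in>N. \<forall>t\<in>N. v \<in> bag s \<longrightarrow> v \<in> bag t \<longrightarrow>
        (s, t) \<in> (F \<inter> {(a, b). v \<in> bag a \<and> v \<in> bag b})\<^sup>*"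
    proof (intro ballI impI)
      fix v s t assume "v \<in> V" "s \<in> N" "t \<in> N" "v \<in> bag s" "v \<in> bag t"
      then have "s = t \<or> (s, t) \<in> F \<inter> {(a, b). v \<in> bag a \<and> v \<in> bag b}"
        unfolding bag_def F_def N_def by auto
      then show "(s, t) \<in> (F \<inter> {(a, b). v \<in> bag a \<and> v \<in> bag b})\<^sup>*" by auto
    qed
  qed
  have cb: "card (bag t) \<le> 2" for t
  proof -
    have "inj_on f (bag t)" using inj unfolding bag_def by (rule inj_on_subset) auto
    then have "card (bag t) = card (f ` bag t)" by (simp add: card_image)
    also have "\<dots> \<le> card {t, t+1}" by (rule card_mono) (auto simp: bag_def)
    also have "\<dots> \<le> 2" by (simp add: card_insert_le_m1)
    finally show ?thesis .
  qed
  have "Max ((\<lambda>t. card (bag t)) ` N) \<le> 2"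
    using cb m by (intro Max.boundedI) (auto simp: N_def lessThan_empty_iff)
  then have w: "decomp_width N bag \<le> 1" unfolding decomp_width_def by simp
  have "treewidth V E \<le> decomp_width N bag" unfolding treewidth_def
    by (rule Least_le) (use td in blast)
  with w show ?thesis by simp
qed



definition M1 :: "nat \<Rightarrow> nat \<Rightarrow> int" where
  "M1 i j = (if j = i then (if i = 0 then 2 else -2) else if j + 1 = i then 1 else 0)"

definition I1 :: "nat \<Rightarrow> milp" where
  "I1 n = (| mat = M1, nrows = n, ncols = n, rhs = (\<lambda>i. if i = 0 then 2 else 0),
     obj = (\<lambda>_. 0), lb = (\<lambda>_. 0), ub = (\<lambda>_. 1), nint = 0 |)"

definition x1 :: "nat \<Rightarrow> nat \<Rightarrow> rat" where
  "x1 n j = (if j < n then 1 / 2 ^ j else 0)"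

lemma odd_ne [simp]: "Suc (2 * a) \<noteq> 2 * b" "2 * b \<noteq> Suc (2 * a)" for a b :: nat
  by presburger+

lemma row1:
  fixes y :: "nat \<Rightarrow> rat"
  assumes "i < n"
  shows "(\<Sum>j<n. of_int (M1 i j) * y j) = (if i = 0 then 2 * y 0 else y (i - 1) - 2 * y i)"
proof (cases "i = 0")
  case True
  have "(\<Sum>j<n. of_int (M1 i j) * y j) = (\<Sum>j<n. if j = 0 then 2 * y j else 0)"
    by (rule sum.cong) (auto simp: M1_def True)
  also have "\<dots> = 2 * y 0" using assms by (simp add: sum.delta)
  finally show ?thesis using True by simp
next
  case False
  have "i - 1 < n" using assms by simp
  have "(\<Sum>j<n. of_int (M1 i j) * y j) = (\<Sum>j<n. (if j = i then - 2 * y j else 0) + (if j = i - 1 then y j else 0))"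
    by (rule sum.cong) (use False in \<open>auto simp: M1_def\<close>)
  also have "\<dots> = y (i - 1) - 2 * y i" using assms \<open>i - 1 < n\<close> by (simp add: sum.distrib sum.delta)
  finally show ?thesis using False by simp
qed

lemma feas1: "feasible (I1 n) (x1 n)"
  unfolding feasible_def
proof (intro conjI allI impI)
  fix i assume i: "i < nrows (I1 n)"
  then have "i < n" by (simp add: I1_def)
  have r: "(\<Sum>j<n. of_int (M1 i j) * x1 n j) = (if i = 0 then 2 * x1 n 0 else x1 n (i - 1) - 2 * x1 n i)"
    by (rule row1) fact
  show "(\<Sum>j<ncols (I1 n). of_int (mat (I1 n) i j) * x1 n j) = of_int (rhs (I1 n) i)"
  proof (cases i)
    case 0 then show ?thesis using r \<open>i < n\<close> by (simp add: I1_def x1_def)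
  next
    case (Suc k) then show ?thesis using r \<open>i < n\<close> by (simp add: I1_def x1_def)
  qed
qed (auto simp: I1_def x1_def)

lemma uniq1:
  assumes "feasible (I1 n) y" "j < n"
  shows "y j = 1 / 2 ^ j"
  using assms(2)
proof (induction j)
  case 0
  then have "(\<Sum>j<n. of_int (M1 0 j) * y j) = 2" using assms(1) by (auto simp: feasible_def I1_def)
  then show ?case using row1[OF 0, of y] by simp
next
  case (Suc j)
  then have "(\<Sum>k<n. of_int (M1 (Suc j) k) * y k) = 0" using assms(1) by (auto simp: feasible_def I1_def)
  then have "y j - 2 * y (Suc j) = 0" using row1[OF Suc(2), of y] by simp
  then show ?case using Suc by simp
qed

lemma tw1:
  assumes "n \<ge> 1"
  shows "primal_tw M1 n n \<le> 1" "dual_tw M1 n n \<le> 1" "incidence_tw M1 n n \<le> 1"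
proof -
  show "primal_tw M1 n n \<le> 1" unfolding primal_tw_def
    by (rule tw_path[where f = id and m = n]) (use assms in \<open>auto simp: primal_graph_def M1_def split: if_splits\<close>)
  show "dual_tw M1 n n \<le> 1" unfolding dual_tw_def
    by (rule tw_path[where f = id and m = n]) (use assms in \<open>auto simp: dual_graph_def M1_def split: if_splits\<close>)
  show "incidence_tw M1 n n \<le> 1" unfolding incidence_tw_def
    by (rule tw_path[where f = "\<lambda>v. case v of Inl i \<Rightarrow> 2 * i | Inr j \<Rightarrow> 2 * j + 1" and m = "2 * n"])
      (use assms in \<open>auto simp: incidence_graph_def M1_def inj_on_def split: if_splits\<close>)
qed

lemma norm1: "n \<ge> 1 \<Longrightarrow> max_norm M1 n n = 2"
  unfolding max_norm_def
proof (rule Max_eqI)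
  assume "n \<ge> 1"
  have "{0} \<union> {\<bar>M1 i j\<bar> | i j. i < n \<and> j < n} \<subseteq> {0, 1, 2}" by (auto simp: M1_def)
  then show "finite ({0} \<union> {\<bar>M1 i j\<bar> | i j. i < n \<and> j < n})" by (rule finite_subset) simp
  show "\<And>y. y \<in> {0} \<union> {\<bar>M1 i j\<bar> | i j. i < n \<and> j < n} \<Longrightarrow> y \<le> 2" by (auto simp: M1_def)
  show "2 \<in> {0} \<union> {\<bar>M1 i j\<bar> | i j. i < n \<and> j < n}" using \<open>n \<ge> 1\<close>
    by (auto simp: M1_def intro!: exI[of _ 0])
qed

lemma frac1:
  assumes "n \<ge> 1"
  shows "has_optimum (I1 n)" "2 ^ (n - 1) \<le> fractionality (I1 n)"
proof -
  have oz: "obj (I1 n) = (\<lambda>_. 0)" by (simp add: I1_def)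
  show ho: "has_optimum (I1 n)" using feas1 opt_zero[OF oz] has_optimum_def by blast
  show "2 ^ (n - 1) \<le> fractionality (I1 n)"
  proof (rule fract_ge[OF ho])
    fix x assume "optimal (I1 n) x"
    then have "feasible (I1 n) x" using opt_zero[OF oz] by blast
    then have "x (n - 1) = 1 / of_nat (2 ^ (n - 1))" using uniq1 assms by simp
    moreover have "denom (1 / of_nat (2 ^ (n - 1))) = 2 ^ (n - 1)" by (rule denom_inv_nat) simp
    ultimately have "denom (x (n - 1)) = 2 ^ (n - 1)" by simp
    moreover have "denom (x (n - 1)) \<le> max_denom (I1 n) x"
      by (rule max_denom_ge) (use assms in \<open>simp add: I1_def\<close>)
    ultimately show "2 ^ (n - 1) \<le> max_denom (I1 n) x" by simp
  qed
qed



definition M2 :: "nat \<Rightarrow> nat \<Rightarrow> nat \<Rightarrow> int" where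
  "M2 n = four_block_nfold (n - 1) 1 1 1 1 (\<lambda>_ _. 1) (\<lambda>_ _. 1) (\<lambda>_ _. 1) (\<lambda>_ _. 1)"

lemma M2_eq: "i < n \<Longrightarrow> j < n \<Longrightarrow> M2 n i j = (if i = 0 \<or> j = 0 \<or> i = j then 1 else 0)"
  by (auto simp: M2_def four_block_nfold_def)

definition I2 :: "nat \<Rightarrow> milp" where
  "I2 n = (| mat = M2 n, nrows = n, ncols = n, rhs = (\<lambda>i. if i = 1 \<and> 3 \<le> n then 1 else 0),
     obj = (\<lambda>_. 0), lb = (\<lambda>_. -1), ub = (\<lambda>_. 1), nint = 0 |)"

definition x2 :: "nat \<Rightarrow> nat \<Rightarrow> rat" where
  "x2 n j = (if 3 \<le> n \<and> j < n then
      (if j = 0 then 1 / of_nat (n - 2) else if j = 1 then 1 - 1 / of_nat (n - 2) else - 1 / of_nat (n - 2))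
     else 0)"

lemma sum3:
  fixes a b d :: rat
  assumes "n \<ge> 2"
  shows "(\<Sum>j<n. if j = 0 then a else if j = 1 then b else d) = a + b + of_nat (n - 2) * d"
  using assms
proof (induction n rule: nat_induct_at_least)
  case base then show ?case by (simp add: numeral_2_eq_2)
next
  case (Suc n) then show ?case by (simp add: of_nat_diff algebra_simps)
qed

lemma row2:
  fixes y :: "nat \<Rightarrow> rat"
  assumes "i < n"
  shows "(\<Sum>j<n. of_int (M2 n i j) * y j) = (if i = 0 then (\<Sum>j<n. y j) else y 0 + y i)"
proof (cases "i = 0")
  case True
  then show ?thesis using assms by (simp add: M2_eq)
next
  case False
  have "(\<Sum>j<n. of_int (M2 n i j) * y j) = (\<Sum>j<n. (if j = 0 then y j else 0) + (if j = i then y j else 0))"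
    by (rule sum.cong) (use False assms in \<open>auto simp: M2_eq\<close>)
  also have "\<dots> = y 0 + y i" using assms by (simp add: sum.distrib sum.delta)
  finally show ?thesis using False by simp
qed

lemma feas2: "feasible (I2 n) (x2 n)"
  unfolding feasible_def
proof (intro conjI allI impI)
  fix i assume i: "i < nrows (I2 n)"
  then have "i < n" by (simp add: I2_def)
  have r: "(\<Sum>j<n. of_int (M2 n i j) * x2 n j) = (if i = 0 then (\<Sum>j<n. x2 n j) else x2 n 0 + x2 n i)"
    by (rule row2) fact
  show "(\<Sum>j<ncols (I2 n). of_int (mat (I2 n) i j) * x2 n j) = of_int (rhs (I2 n) i)"
  proof (cases "3 \<le> n")
    case False
    then show ?thesis using r by (simp add: I2_def x2_def)
  next
    case True
    have "(\<Sum>j<n. x2 n j) = (\<Sum>j<n. if j = 0 then 1 / of_nat (n - 2) else if j = 1 then 1 - 1 / of_nat (n - 2) else - 1 / of_nat (n - 2))"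
      by (rule sum.cong) (use True in \<open>auto simp: x2_def\<close>)
    also have "\<dots> = 0" using True by (subst sum3) auto
    finally have s0: "(\<Sum>j<n. x2 n j) = 0" .
    show ?thesis using r s0 True \<open>i < n\<close> by (auto simp: I2_def x2_def)
  qed
next
  fix j assume "j < ncols (I2 n)"
  then show "of_int (lb (I2 n) j) \<le> x2 n j"
    by (auto simp: I2_def x2_def field_simps)
next
  fix j assume "j < ncols (I2 n)"
  then show "x2 n j \<le> of_int (ub (I2 n) j)"
    by (auto simp: I2_def x2_def field_simps)
qed (auto simp: I2_def x2_def)

lemma uniq2:
  assumes "feasible (I2 n) y" "3 \<le> n"
  shows "y 0 = 1 / of_nat (n - 2)"
proof -
  have rows: "(\<Sum>j<n. of_int (M2 n i j) * y j) = of_int (if i = 1 then 1 else 0)" if "i < n" for i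
    using assms that by (auto simp: feasible_def I2_def)
  have yi: "y i = (if i = 1 then 1 else 0) - y 0" if "i < n" "i \<noteq> 0" for i
    using rows[OF that(1)] row2[OF that(1), of y] that by (auto split: if_splits)
  have "(\<Sum>j<n. y j) = 0" using rows[of 0] row2[of 0 n y] assms(2) by simp
  moreover have "(\<Sum>j<n. y j) = (\<Sum>j<n. if j = 0 then y 0 else if j = 1 then 1 - y 0 else - y 0)"
    by (rule sum.cong) (auto simp: yi)
  moreover have "\<dots> = 1 - of_nat (n - 2) * y 0" using assms(2) by (subst sum3) auto
  ultimately have "of_nat (n - 2) * y 0 = 1" by linarith
  moreover have "(of_nat (n - 2) :: rat) \<noteq> 0" using assms(2) by simp
  ultimately show ?thesis by (metis nonzero_eq_divide_eq mult.commute)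
qed

lemma frac2:
  shows "has_optimum (I2 n)" "3 \<le> n \<Longrightarrow> n - 2 \<le> fractionality (I2 n)"
proof -
  have oz: "obj (I2 n) = (\<lambda>_. 0)" by (simp add: I2_def)
  show ho: "has_optimum (I2 n)" using feas2 opt_zero[OF oz] has_optimum_def by blast
  assume n: "3 \<le> n"
  show "n - 2 \<le> fractionality (I2 n)"
  proof (rule fract_ge[OF ho])
    fix x assume "optimal (I2 n) x"
    then have "feasible (I2 n) x" using opt_zero[OF oz] by blast
    then have "x 0 = 1 / of_nat (n - 2)" using uniq2 n by simp
    moreover have "denom (1 / of_nat (n - 2)) = n - 2" by (rule denom_inv_nat) (use n in simp)
    ultimately have "denom (x 0) = n - 2" by simp
    moreover have "denom (x 0) \<le> max_denom (I2 n) x"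
      by (rule max_denom_ge) (use n in \<open>simp add: I2_def\<close>)
    ultimately show "n - 2 \<le> max_denom (I2 n) x" by simp
  qed
qed



theorem lemma1:
  shows "\<exists>(K::nat) (c::real) (N::nat). c > 0 \<and> (\<forall>n\<ge>1. \<exists>I1 I2.
      milp_wf I1 \<and> nrows I1 = n \<and> ncols I1 = n \<and>
      primal_tw (mat I1) n n \<le> K \<and> dual_tw (mat I1) n n \<le> K \<and>
      incidence_tw (mat I1) n n \<le> K \<and> max_norm (mat I1) n n = 2 \<and>
      milp_wf I2 \<and> nrows I2 = n \<and> ncols I2 = n \<and>
      (\<forall>i<n. \<forall>j<n. mat I2 i j =
         four_block_nfold (n - 1) 1 1 1 1 (\<lambda>_ _. 1) (\<lambda>_ _. 1) (\<lambda>_ _. 1) (\<lambda>_ _. 1) i j) \<and>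
      has_optimum I1 \<and> has_optimum I2 \<and>
      (n \<ge> N \<longrightarrow> real (fractionality I1) \<ge> 2 powr (c * real n) \<and>
                   real (fractionality I2) \<ge> c * real n))"
proof -
  have main: "\<forall>n\<ge>1. \<exists>I1 I2.
      milp_wf I1 \<and> nrows I1 = n \<and> ncols I1 = n \<and>
      primal_tw (mat I1) n n \<le> 1 \<and> dual_tw (mat I1) n n \<le> 1 \<and>
      incidence_tw (mat I1) n n \<le> 1 \<and> max_norm (mat I1) n n = 2 \<and>
      milp_wf I2 \<and> nrows I2 = n \<and> ncols I2 = n \<and>
      (\<forall>i<n. \<forall>j<n. mat I2 i j =
         four_block_nfold (n - 1) 1 1 1 1 (\<lambda>_ _. 1) (\<lambda>_ _. 1) (\<lambda>_ _. 1) (\<lambda>_ _. 1) i j) \<and>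
      has_optimum I1 \<and> has_optimum I2 \<and>
      (n \<ge> 3 \<longrightarrow> real (fractionality I1) \<ge> 2 powr (1/3 * real n) \<and>
                   real (fractionality I2) \<ge> 1/3 * real n)"
  proof (intro allI impI)
  fix n :: nat assume n: "n \<ge> 1"
  have big: "real (fractionality (I1 n)) \<ge> 2 powr (1/3 * real n) \<and>
             real (fractionality (I2 n)) \<ge> 1/3 * real n" if n3: "n \<ge> 3"
  proof
    have "2 powr (1/3 * real n) \<le> 2 powr (real (n - 1))"
      by (rule powr_mono) (use n3 in auto)
    also have "\<dots> = real (2 ^ (n - 1))" by (simp add: powr_realpow)
    also have "\<dots> \<le> real (fractionality (I1 n))" using frac1(2)[OF n] by linarith
    finally show "real (fractionality (I1 n)) \<ge> 2 powr (1/3 * real n)" .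
    have "1/3 * real n \<le> real (n - 2)" using n3 by auto
    also have "\<dots> \<le> real (fractionality (I2 n))" using frac2(2)[OF n3] by linarith
    finally show "real (fractionality (I2 n)) \<ge> 1/3 * real n" .
  qed
  show "\<exists>I1 I2.
      milp_wf I1 \<and> nrows I1 = n \<and> ncols I1 = n \<and>
      primal_tw (mat I1) n n \<le> 1 \<and> dual_tw (mat I1) n n \<le> 1 \<and>
      incidence_tw (mat I1) n n \<le> 1 \<and> max_norm (mat I1) n n = 2 \<and>
      milp_wf I2 \<and> nrows I2 = n \<and> ncols I2 = n \<and>
      (\<forall>i<n. \<forall>j<n. mat I2 i j =
         four_block_nfold (n - 1) 1 1 1 1 (\<lambda>_ _. 1) (\<lambda>_ _. 1) (\<lambda>_ _. 1) (\<lambda>_ _. 1) i j) \<and>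
      has_optimum I1 \<and> has_optimum I2 \<and>
      (n \<ge> 3 \<longrightarrow> real (fractionality I1) \<ge> 2 powr (1/3 * real n) \<and>
                   real (fractionality I2) \<ge> 1/3 * real n)"
    apply (rule exI[of _ "I1 n"], rule exI[of _ "I2 n"])
    using tw1[OF n] norm1[OF n] frac1(1)[OF n] frac2(1)[of n] big
    by (simp add: I1_def I2_def M2_def milp_wf_def)
qed
  show ?thesis
    apply (rule exI[of _ "1::nat"], rule exI[of _ "1/3::real"], rule exI[of _ "3::nat"])
    using main by simp
qed


end
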